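(* There exists a real binary sextic form $q\in F_{2,6}$ having two distinct signatures; i.e. the natural analogue of Sylvester's law of inertia fails for binary sextics.
   Context: $F_{2,6}$ is the space of real binary sextic forms in $x,y$. A representation of $p$ is an expression $p=\sum_{j=1}^r\lambda_j(\alpha_jx+\beta_jy)^{6}$ with $r\ge0$, $\alpha_j,\beta_j\in\mathbb R$, $0\ne\lambda_j\in\mathbb R$; it is honest if the linear forms $\alpha_jx+\beta_jy$ are pairwise non-proportional. Its badge is $(a,b)$ where $a=\#\{j:\lambda_j>0\}$, $b=\#\{j:\lambda_j<0\}$; $\mathcal B(p)$ is the set of badges of honest representations. With $(a,b)\preceq(c,d)$ iff $a\le c,b\le d$, a signature is a minimal element of $\mathcal B(p)$. *)

theory Defs
  imports Main Complex_Main
begin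

definition sextic_form :: "(real \<Rightarrow> real \<Rightarrow> real) \<Rightarrow> bool" where
  "sextic_form q \<longleftrightarrow> (\<exists>c :: nat \<Rightarrow> real. q = (\<lambda>x y. \<Sum>k\<le>6. c k * x ^ k * y ^ (6 - k)))"

definition rep_eval :: "(real \<times> real \<times> real) list \<Rightarrow> real \<Rightarrow> real \<Rightarrow> real" where
  "rep_eval R = (\<lambda>x y. \<Sum>j<length R. fst (R ! j) * (fst (snd (R ! j)) * x + snd (snd (R ! j)) * y) ^ 6)"

definition is_rep :: "(real \<Rightarrow> real \<Rightarrow> real) \<Rightarrow> (real \<times> real \<times> real) list \<Rightarrow> bool" where
  "is_rep p R \<longleftrightarrow> (\<forall>j<length R. fst (R ! j) \<noteq> 0) \<and> p = rep_eval R"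

definition honest :: "(real \<times> real \<times> real) list \<Rightarrow> bool" where
  "honest R \<longleftrightarrow> (\<forall>i<length R. \<forall>j<length R. i \<noteq> j \<longrightarrow>
      fst (snd (R ! i)) * snd (snd (R ! j)) - fst (snd (R ! j)) * snd (snd (R ! i)) \<noteq> 0)"

definition badge :: "(real \<times> real \<times> real) list \<Rightarrow> nat \<times> nat" where
  "badge R = (card {j. j < length R \<and> fst (R ! j) > 0}, card {j. j < length R \<and> fst (R ! j) < 0})"

definition badges :: "(real \<Rightarrow> real \<Rightarrow> real) \<Rightarrow> (nat \<times> nat) set" where
  "badges p = {badge R | R. is_rep p R \<and> honest R}"

definition badge_le :: "nat \<times> nat \<Rightarrow> nat \<times> nat \<Rightarrow> bool" where
  "badge_le u v \<longleftrightarrow> fst u \<le> fst v \<and> snd u \<le> snd v"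

definition is_signature :: "(real \<Rightarrow> real \<Rightarrow> real) \<Rightarrow> nat \<times> nat \<Rightarrow> bool" where
  "is_signature p s \<longleftrightarrow> s \<in> badges p \<and> (\<forall>t \<in> badges p. badge_le t s \<longrightarrow> t = s)"

end

theory Submission
  imports Defs
begin

definition mu :: "nat \<Rightarrow> real" where "mu k = (if k \<le> 3 then - (2^k) else 2^k/4)"
definition cq :: "nat \<Rightarrow> real" where "cq k = real (6 choose k) * mu k"
definition qq :: "real \<Rightarrow> real \<Rightarrow> real" where "qq = (\<lambda>x y. \<Sum>k\<le>6. cq k * x^k * y^(6-k))"
definition Mk :: "nat \<Rightarrow> (real \<times> real \<times> real) list \<Rightarrow> real" where
  "Mk k R = (\<Sum>j<length R. fst (R!j) * fst (snd (R!j))^k * snd (snd (R!j))^(6-k))"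

lemma sextic_qq: "sextic_form qq"
  unfolding sextic_form_def qq_def by blast

lemma moments:
  assumes "qq = rep_eval R" "k \<le> 6"
  shows "Mk k R = mu k"
proof -
  have "\<forall>x. (\<Sum>k\<le>6. cq k * x^k) = (\<Sum>k\<le>6. (real (6 choose k) * Mk k R) * x^k)"
  proof
    fix x :: real
    have "(\<Sum>k\<le>6. cq k * x^k) = qq x 1" by (simp add: qq_def)
    also have "\<dots> = rep_eval R x 1" using assms by simp
    also have "\<dots> = (\<Sum>j<length R. fst (R!j) * (fst (snd (R!j)) * x + snd (snd (R!j)))^6)"
      by (simp add: rep_eval_def)
    also have "\<dots> = (\<Sum>j<length R. fst (R!j) * (\<Sum>k\<le>6. real (6 choose k) * (fst (snd (R!j)) * x)^k * snd (snd (R!j))^(6-k)))"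
      by (simp only: binomial_ring of_nat_id)
    also have "\<dots> = (\<Sum>j<length R. \<Sum>k\<le>6. (real (6 choose k) * (fst (R!j) * fst (snd (R!j))^k * snd (snd (R!j))^(6-k))) * x^k)"
      by (simp add: sum_distrib_left power_mult_distrib mult_ac)
    also have "\<dots> = (\<Sum>k\<le>6. \<Sum>j<length R. (real (6 choose k) * (fst (R!j) * fst (snd (R!j))^k * snd (snd (R!j))^(6-k))) * x^k)"
      by (rule sum.swap)
    also have "\<dots> = (\<Sum>k\<le>6. (real (6 choose k) * Mk k R) * x^k)"
      by (simp add: Mk_def sum_distrib_left sum_distrib_right)
    finally show "(\<Sum>k\<le>6. cq k * x^k) = (\<Sum>k\<le>6. (real (6 choose k) * Mk k R) * x^k)" .
  qed
  then have "\<forall>k\<le>6. cq k = real (6 choose k) * Mk k R" by (simp only: polyfun_eq_coeffs)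
  then have "cq k = real (6 choose k) * Mk k R" using assms(2) by blast
  moreover have "(6 choose k) \<noteq> 0" using assms(2) by simp
  ultimately show ?thesis by (simp add: cq_def)
qed

lemma VL3:
  fixes a1 b1 a2 b2 a3 b3 A B C :: real
  assumes nb: "b1 \<noteq> 0" "b2 \<noteq> 0" "b3 \<noteq> 0"
    and d: "a1*b2 - a2*b1 \<noteq> 0" "a1*b3 - a3*b1 \<noteq> 0" "a2*b3 - a3*b2 \<noteq> 0"
    and z: "A*a1^4 + B*a1*b1^3 + C*b1^4 = 0" "A*a2^4 + B*a2*b2^3 + C*b2^4 = 0"
           "A*a3^4 + B*a3*b3^3 + C*b3^4 = 0"
  shows "A = 0 \<and> B = 0 \<and> C = 0"
proof -
  define t1 where "t1 = a1/b1"
  define t2 where "t2 = a2/b2"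
  define t3 where "t3 = a3/b3"
  have f: "A*t^4 + B*t + C = 0" if "t = a/b" "b \<noteq> 0" "A*a^4 + B*a*b^3 + C*b^4 = 0" for t a b
  proof -
    have "A*t^4 + B*t + C = (A*a^4 + B*a*b^3 + C*b^4) / b^4"
      using that(2) unfolding that(1) by (simp add: field_simps power_divide) (simp add: power_def)
    then show ?thesis using that(3) by simp
  qed
  have f1: "A*t1^4 + B*t1 + C = 0" using f[OF t1_def nb(1) z(1)] .
  have f2: "A*t2^4 + B*t2 + C = 0" using f[OF t2_def nb(2) z(2)] .
  have f3: "A*t3^4 + B*t3 + C = 0" using f[OF t3_def nb(3) z(3)] .
  have n12: "t1 \<noteq> t2" using d(1) nb unfolding t1_def t2_def by (simp add: frac_eq_eq)
  have n13: "t1 \<noteq> t3" using d(2) nb unfolding t1_def t3_def by (simp add: frac_eq_eq)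
  have n23: "t2 \<noteq> t3" using d(3) nb unfolding t2_def t3_def by (simp add: frac_eq_eq)
  have e12: "(t1 - t2) * (A*(t1^3+t1^2*t2+t1*t2^2+t2^3) + B) = 0"
    using f1 f2 by algebra
  have e13: "(t1 - t3) * (A*(t1^3+t1^2*t3+t1*t3^2+t3^3) + B) = 0"
    using f1 f3 by algebra
  have g12: "A*(t1^3+t1^2*t2+t1*t2^2+t2^3) + B = 0" using e12 n12 by simp
  have g13: "A*(t1^3+t1^2*t3+t1*t3^2+t3^3) + B = 0" using e13 n13 by simp
  have "(t2 - t3) * (A * (t1^2+t2^2+t3^2+t1*t2+t1*t3+t2*t3)) = 0"
    using g12 g13 by algebra
  then have h: "A * (t1^2+t2^2+t3^2+t1*t2+t1*t3+t2*t3) = 0" using n23 by simp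
  define hh where "hh = t1^2+t2^2+t3^2+t1*t2+t1*t3+t2*t3"
  define P where "P = (t2 - t3)^2"
  define Q where "Q = (2*t1+t2+t3)^2 + 2*(t2+t3)^2"
  have "P > 0" using n23 unfolding P_def by simp
  moreover have "4*hh - P = Q" unfolding hh_def P_def Q_def by algebra
  moreover have "Q \<ge> 0" unfolding Q_def by simp
  ultimately have "hh > 0" by linarith
  then have "t1^2+t2^2+t3^2+t1*t2+t1*t3+t2*t3 \<noteq> 0" unfolding hh_def by simp
  with h have A0: "A = 0" by simp
  have l1: "B*a1 + C*b1 = 0"
  proof -
    have "b1^3 * (B*a1 + C*b1) = 0" using z(1) A0 by (simp add: algebra_simps power_def)
    then show ?thesis using nb(1) by simp
  qed
  have l2: "B*a2 + C*b2 = 0"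
  proof -
    have "b2^3 * (B*a2 + C*b2) = 0" using z(2) A0 by (simp add: algebra_simps power_def)
    then show ?thesis using nb(2) by simp
  qed
  have "B * (a1*b2 - a2*b1) = 0" using l1 l2 by algebra
  then have B0: "B = 0" using d(1) by simp
  then have "C = 0" using l1 nb(1) by simp
  with A0 B0 show ?thesis by simp
qed

lemma VL4:
  fixes a0 b0 a1 b1 a2 b2 a3 b3 A B C :: real
  assumes d: "a0*b1 - a1*b0 \<noteq> 0" "a0*b2 - a2*b0 \<noteq> 0" "a0*b3 - a3*b0 \<noteq> 0"
     "a1*b2 - a2*b1 \<noteq> 0" "a1*b3 - a3*b1 \<noteq> 0" "a2*b3 - a3*b2 \<noteq> 0"
    and z: "A*a0^4 + B*a0*b0^3 + C*b0^4 = 0" "A*a1^4 + B*a1*b1^3 + C*b1^4 = 0"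
           "A*a2^4 + B*a2*b2^3 + C*b2^4 = 0" "A*a3^4 + B*a3*b3^3 + C*b3^4 = 0"
  shows "A = 0 \<and> B = 0 \<and> C = 0"
proof (cases "b0 = 0")
  case True
  then have "b1 \<noteq> 0" "b2 \<noteq> 0" "b3 \<noteq> 0" using d by auto
  then show ?thesis using VL3[of b1 b2 b3 a1 a2 a3 A B C] d z by blast
next
  case b0: False
  show ?thesis
  proof (cases "b1 = 0")
    case True
    then have "b2 \<noteq> 0" "b3 \<noteq> 0" using d by auto
    then show ?thesis using VL3[of b0 b2 b3 a0 a2 a3 A B C] b0 d z by blast
  next
    case b1: False
    show ?thesis
    proof (cases "b2 = 0")
      case True
      then have "b3 \<noteq> 0" using d by auto
      then show ?thesis using VL3[of b0 b1 b3 a0 a1 a3 A B C] b0 b1 d z by blast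
    next
      case False
      then show ?thesis using VL3[of b0 b1 b2 a0 a1 a2 A B C] b0 b1 d z by blast
    qed
  qed
qed

lemma pair_lemma:
  fixes lAx aAx bAx lBx aBx bBx lCx aCx bCx lDx aDx bDx :: real
  assumes
    "lAx*bAx^6 + lBx*bBx^6 + lCx*bCx^6 + lDx*bDx^6 = -1"
    "lAx*aAx*bAx^5 + lBx*aBx*bBx^5 + lCx*aCx*bCx^5 + lDx*aDx*bDx^5 = -2"
    "lAx*aAx^2*bAx^4 + lBx*aBx^2*bBx^4 + lCx*aCx^2*bCx^4 + lDx*aDx^2*bDx^4 = -4"
    "lAx*aAx^3*bAx^3 + lBx*aBx^3*bBx^3 + lCx*aCx^3*bCx^3 + lDx*aDx^3*bDx^3 = -8"
    "lAx*aAx^4*bAx^2 + lBx*aBx^4*bBx^2 + lCx*aCx^4*bCx^2 + lDx*aDx^4*bDx^2 = 4"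
    "lAx*aAx^5*bAx + lBx*aBx^5*bBx + lCx*aCx^5*bCx + lDx*aDx^5*bDx = 8"
    "lAx*aAx^6 + lBx*aBx^6 + lCx*aCx^6 + lDx*aDx^6 = 16"
  shows "lAx*(aAx^4 + 2*aAx*bAx^3)*((bCx*aAx - aCx*bAx)*(bDx*aAx - aDx*bAx)) + lBx*(aBx^4 + 2*aBx*bBx^3)*((bCx*aBx - aCx*bBx)*(bDx*aBx - aDx*bBx)) = 0"
    and "lAx*(2*bAx^4 - aAx*bAx^3)*((bCx*aAx - aCx*bAx)*(bDx*aAx - aDx*bAx)) + lBx*(2*bBx^4 - aBx*bBx^3)*((bCx*aBx - aCx*bBx)*(bDx*aBx - aDx*bBx)) = 0"
proof -
  have "lAx*(aAx^4 + 2*aAx*bAx^3)*((bCx*aAx - aCx*bAx)*(bDx*aAx - aDx*bAx)) + lBx*(aBx^4 + 2*aBx*bBx^3)*((bCx*aBx - aCx*bBx)*(bDx*aBx - aDx*bBx))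
    = bCx*bDx*((lAx*aAx^6 + lBx*aBx^6 + lCx*aCx^6 + lDx*aDx^6) + 2*(lAx*aAx^3*bAx^3 + lBx*aBx^3*bBx^3 + lCx*aCx^3*bCx^3 + lDx*aDx^3*bDx^3))
      - (bCx*aDx + aCx*bDx)*((lAx*aAx^5*bAx + lBx*aBx^5*bBx + lCx*aCx^5*bCx + lDx*aDx^5*bDx) + 2*(lAx*aAx^2*bAx^4 + lBx*aBx^2*bBx^4 + lCx*aCx^2*bCx^4 + lDx*aDx^2*bDx^4))
      + aCx*aDx*((lAx*aAx^4*bAx^2 + lBx*aBx^4*bBx^2 + lCx*aCx^4*bCx^2 + lDx*aDx^4*bDx^2) + 2*(lAx*aAx*bAx^5 + lBx*aBx*bBx^5 + lCx*aCx*bCx^5 + lDx*aDx*bDx^5))"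
    by algebra
  then show "lAx*(aAx^4 + 2*aAx*bAx^3)*((bCx*aAx - aCx*bAx)*(bDx*aAx - aDx*bAx)) + lBx*(aBx^4 + 2*aBx*bBx^3)*((bCx*aBx - aCx*bBx)*(bDx*aBx - aDx*bBx)) = 0"
    using assms by simp
  have "lAx*(2*bAx^4 - aAx*bAx^3)*((bCx*aAx - aCx*bAx)*(bDx*aAx - aDx*bAx)) + lBx*(2*bBx^4 - aBx*bBx^3)*((bCx*aBx - aCx*bBx)*(bDx*aBx - aDx*bBx))
    = bCx*bDx*(2*(lAx*aAx^2*bAx^4 + lBx*aBx^2*bBx^4 + lCx*aCx^2*bCx^4 + lDx*aDx^2*bDx^4) - (lAx*aAx^3*bAx^3 + lBx*aBx^3*bBx^3 + lCx*aCx^3*bCx^3 + lDx*aDx^3*bDx^3))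
      - (bCx*aDx + aCx*bDx)*(2*(lAx*aAx*bAx^5 + lBx*aBx*bBx^5 + lCx*aCx*bCx^5 + lDx*aDx*bDx^5) - (lAx*aAx^2*bAx^4 + lBx*aBx^2*bBx^4 + lCx*aCx^2*bCx^4 + lDx*aDx^2*bDx^4))
      + aCx*aDx*(2*(lAx*bAx^6 + lBx*bBx^6 + lCx*bCx^6 + lDx*bDx^6) - (lAx*aAx*bAx^5 + lBx*aBx*bBx^5 + lCx*aCx*bCx^5 + lDx*aDx*bDx^5))"
    by algebra
  then show "lAx*(2*bAx^4 - aAx*bAx^3)*((bCx*aAx - aCx*bAx)*(bDx*aAx - aDx*bAx)) + lBx*(2*bBx^4 - aBx*bBx^3)*((bCx*aBx - aCx*bBx)*(bDx*aBx - aDx*bBx)) = 0"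
    using assms by simp
qed

lemma zero_pt:
  fixes a b :: real
  assumes "a^4 + 2*a*b^3 = 0" "2*b^4 - a*b^3 = 0"
  shows "a = 0 \<and> b = 0"
proof -
  have s: "a^4 + 4*b^4 = 0" using assms by linarith
  have "a^4 \<ge> 0" "b^4 \<ge> 0" by auto
  then have "a^4 = 0" "b^4 = 0" using s by linarith+
  then show ?thesis by simp
qed


lemma sum4: "(\<Sum>j<4. f j) = f 0 + f 1 + f 2 + f (3::nat)"
  by (simp add: numeral_eq_Suc)

lemma mu_vals: "mu 0 = -1" "mu 1 = -2" "mu 2 = -4" "mu 3 = -8" "mu 4 = 4" "mu 5 = 8" "mu 6 = 16"
  by (simp_all add: mu_def)

lemma len4_false:
  fixes l0 a0 b0 l1 a1 b1 l2 a2 b2 l3 a3 b3 :: real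
  assumes M: "\<And>k. k \<le> 6 \<Longrightarrow> l0*a0^k*b0^(6-k) + l1*a1^k*b1^(6-k) + l2*a2^k*b2^(6-k) + l3*a3^k*b3^(6-k) = mu k"
    and l: "l0 \<noteq> 0" "l1 \<noteq> 0" "l2 \<noteq> 0" "l3 \<noteq> 0"
    and d: "a0*b1 - a1*b0 \<noteq> 0" "a0*b2 - a2*b0 \<noteq> 0" "a0*b3 - a3*b0 \<noteq> 0"
     "a1*b2 - a2*b1 \<noteq> 0" "a1*b3 - a3*b1 \<noteq> 0" "a2*b3 - a3*b2 \<noteq> 0"
  shows False
proof -
  have M0: "l0*b0^6 + l1*b1^6 + l2*b2^6 + l3*b3^6 = -1" using M[of 0] by (simp add: mu_def)
  have M1: "l0*a0*b0^5 + l1*a1*b1^5 + l2*a2*b2^5 + l3*a3*b3^5 = -2" using M[of 1] by (simp add: mu_def)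
  have M2: "l0*a0^2*b0^4 + l1*a1^2*b1^4 + l2*a2^2*b2^4 + l3*a3^2*b3^4 = -4" using M[of 2] by (simp add: mu_def)
  have M3: "l0*a0^3*b0^3 + l1*a1^3*b1^3 + l2*a2^3*b2^3 + l3*a3^3*b3^3 = -8" using M[of 3] by (simp add: mu_def)
  have M4: "l0*a0^4*b0^2 + l1*a1^4*b1^2 + l2*a2^4*b2^2 + l3*a3^4*b3^2 = 4" using M[of 4] by (simp add: mu_def)
  have M5: "l0*a0^5*b0 + l1*a1^5*b1 + l2*a2^5*b2 + l3*a3^5*b3 = 8" using M[of 5] by (simp add: mu_def)
  have M6: "l0*a0^6 + l1*a1^6 + l2*a2^6 + l3*a3^6 = 16" using M[of 6] by (simp add: mu_def)
  define X where "X = (\<lambda>a b::real. a^4 + 2*a*b^3)"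
  define Y where "Y = (\<lambda>a b::real. 2*b^4 - a*b^3)"
  have cross: "Y a0 b0 * X aj bj - X a0 b0 * Y aj bj = 0"
    if P: "l0*(a0^4 + 2*a0*b0^3)*m0 + lj*(aj^4 + 2*aj*bj^3)*mj = 0"
          "l0*(2*b0^4 - a0*b0^3)*m0 + lj*(2*bj^4 - aj*bj^3)*mj = 0"
      and nz: "m0 \<noteq> 0"
    for aj bj lj m0 mj :: real
  proof -
    have "(l0*m0) * (Y a0 b0 * X aj bj - X a0 b0 * Y aj bj) = 0"
      using P unfolding X_def Y_def by algebra
    then show ?thesis using nz l(1) by simp
  qed
  have c1: "Y a0 b0 * X a1 b1 - X a0 b0 * Y a1 b1 = 0"
  proof (rule cross)
    show "l0*(a0^4 + 2*a0*b0^3)*((b2*a0 - a2*b0)*(b3*a0 - a3*b0)) + l1*(a1^4 + 2*a1*b1^3)*((b2*a1 - a2*b1)*(b3*a1 - a3*b1)) = 0"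
      apply (rule pair_lemma(1)[where lAx=l0 and aAx=a0 and bAx=b0 and lBx=l1 and aBx=a1 and bBx=b1 and lCx=l2 and aCx=a2 and bCx=b2 and lDx=l3 and aDx=a3 and bDx=b3]) using M0 M1 M2 M3 M4 M5 M6 by linarith+
    show "l0*(2*b0^4 - a0*b0^3)*((b2*a0 - a2*b0)*(b3*a0 - a3*b0)) + l1*(2*b1^4 - a1*b1^3)*((b2*a1 - a2*b1)*(b3*a1 - a3*b1)) = 0"
      apply (rule pair_lemma(2)[where lAx=l0 and aAx=a0 and bAx=b0 and lBx=l1 and aBx=a1 and bBx=b1 and lCx=l2 and aCx=a2 and bCx=b2 and lDx=l3 and aDx=a3 and bDx=b3]) using M0 M1 M2 M3 M4 M5 M6 by linarith+
    show "(b2*a0 - a2*b0)*(b3*a0 - a3*b0) \<noteq> 0" using d by (simp add: mult.commute)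
  qed
  have c2: "Y a0 b0 * X a2 b2 - X a0 b0 * Y a2 b2 = 0"
  proof (rule cross)
    show "l0*(a0^4 + 2*a0*b0^3)*((b1*a0 - a1*b0)*(b3*a0 - a3*b0)) + l2*(a2^4 + 2*a2*b2^3)*((b1*a2 - a1*b2)*(b3*a2 - a3*b2)) = 0"
      apply (rule pair_lemma(1)[where lAx=l0 and aAx=a0 and bAx=b0 and lBx=l2 and aBx=a2 and bBx=b2 and lCx=l1 and aCx=a1 and bCx=b1 and lDx=l3 and aDx=a3 and bDx=b3]) using M0 M1 M2 M3 M4 M5 M6 by linarith+
    show "l0*(2*b0^4 - a0*b0^3)*((b1*a0 - a1*b0)*(b3*a0 - a3*b0)) + l2*(2*b2^4 - a2*b2^3)*((b1*a2 - a1*b2)*(b3*a2 - a3*b2)) = 0"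
      apply (rule pair_lemma(2)[where lAx=l0 and aAx=a0 and bAx=b0 and lBx=l2 and aBx=a2 and bBx=b2 and lCx=l1 and aCx=a1 and bCx=b1 and lDx=l3 and aDx=a3 and bDx=b3]) using M0 M1 M2 M3 M4 M5 M6 by linarith+
    show "(b1*a0 - a1*b0)*(b3*a0 - a3*b0) \<noteq> 0" using d by (simp add: mult.commute)
  qed
  have c3: "Y a0 b0 * X a3 b3 - X a0 b0 * Y a3 b3 = 0"
  proof (rule cross)
    show "l0*(a0^4 + 2*a0*b0^3)*((b1*a0 - a1*b0)*(b2*a0 - a2*b0)) + l3*(a3^4 + 2*a3*b3^3)*((b1*a3 - a1*b3)*(b2*a3 - a2*b3)) = 0"
      apply (rule pair_lemma(1)[where lAx=l0 and aAx=a0 and bAx=b0 and lBx=l3 and aBx=a3 and bBx=b3 and lCx=l1 and aCx=a1 and bCx=b1 and lDx=l2 and aDx=a2 and bDx=b2]) using M0 M1 M2 M3 M4 M5 M6 by linarith+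
    show "l0*(2*b0^4 - a0*b0^3)*((b1*a0 - a1*b0)*(b2*a0 - a2*b0)) + l3*(2*b3^4 - a3*b3^3)*((b1*a3 - a1*b3)*(b2*a3 - a2*b3)) = 0"
      apply (rule pair_lemma(2)[where lAx=l0 and aAx=a0 and bAx=b0 and lBx=l3 and aBx=a3 and bBx=b3 and lCx=l1 and aCx=a1 and bCx=b1 and lDx=l2 and aDx=a2 and bDx=b2]) using M0 M1 M2 M3 M4 M5 M6 by linarith+
    show "(b1*a0 - a1*b0)*(b2*a0 - a2*b0) \<noteq> 0" using d by (simp add: mult.commute)
  qed
  define g where "g = Y a0 b0"
  define h where "h = X a0 b0"
  have z: "g*a^4 + (2*g+h)*a*b^3 + (-2*h)*b^4 = Y a0 b0 * X a b - X a0 b0 * Y a b" for a b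
    unfolding g_def h_def X_def Y_def by algebra
  have "g = 0 \<and> 2*g+h = 0 \<and> -2*h = 0"
    apply (rule VL4[OF d])
    using c1 c2 c3 z[of a0 b0] z[of a1 b1] z[of a2 b2] z[of a3 b3] by (simp_all add: algebra_simps)
  then have "a0 = 0 \<and> b0 = 0" using zero_pt[of a0 b0] unfolding g_def h_def X_def Y_def by simp
  then show False using d(1) by simp
qed


lemma len3_false:
  fixes l0 a0 b0 l1 a1 b1 l2 a2 b2 :: real
  assumes M: "\<And>k. k \<le> 6 \<Longrightarrow> l0*a0^k*b0^(6-k) + l1*a1^k*b1^(6-k) + l2*a2^k*b2^(6-k) = mu k"
    and l: "l0 \<noteq> 0"
    and m: "(b1*a0 - a1*b0)*(b2*a0 - a2*b0) \<noteq> 0"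
  shows False
proof -
  have M0: "l0*b0^6 + l1*b1^6 + l2*b2^6 = -1" using M[of 0] by (simp add: mu_def)
  have M1: "l0*a0*b0^5 + l1*a1*b1^5 + l2*a2*b2^5 = -2" using M[of 1] by (simp add: mu_def)
  have M2: "l0*a0^2*b0^4 + l1*a1^2*b1^4 + l2*a2^2*b2^4 = -4" using M[of 2] by (simp add: mu_def)
  have M3: "l0*a0^3*b0^3 + l1*a1^3*b1^3 + l2*a2^3*b2^3 = -8" using M[of 3] by (simp add: mu_def)
  have M4: "l0*a0^4*b0^2 + l1*a1^4*b1^2 + l2*a2^4*b2^2 = 4" using M[of 4] by (simp add: mu_def)
  have M5: "l0*a0^5*b0 + l1*a1^5*b1 + l2*a2^5*b2 = 8" using M[of 5] by (simp add: mu_def)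
  have M6: "l0*a0^6 + l1*a1^6 + l2*a2^6 = 16" using M[of 6] by (simp add: mu_def)
  have P1: "l0*(a0^4 + 2*a0*b0^3)*((b1*a0 - a1*b0)*(b2*a0 - a2*b0)) + 0*(0^4 + 2*0*0^3)*((b1*0 - a1*0)*(b2*0 - a2*0)) = 0"
    apply (rule pair_lemma(1)[where lAx=l0 and aAx=a0 and bAx=b0 and lBx=0 and aBx=0 and bBx=0 and lCx=l1 and aCx=a1 and bCx=b1 and lDx=l2 and aDx=a2 and bDx=b2])
    using M0 M1 M2 M3 M4 M5 M6 by simp_all
  have P2: "l0*(2*b0^4 - a0*b0^3)*((b1*a0 - a1*b0)*(b2*a0 - a2*b0)) + 0*(2*0^4 - 0*0^3)*((b1*0 - a1*0)*(b2*0 - a2*0)) = 0"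
    apply (rule pair_lemma(2)[where lAx=l0 and aAx=a0 and bAx=b0 and lBx=0 and aBx=0 and bBx=0 and lCx=l1 and aCx=a1 and bCx=b1 and lDx=l2 and aDx=a2 and bDx=b2])
    using M0 M1 M2 M3 M4 M5 M6 by simp_all
  have "a0^4 + 2*a0*b0^3 = 0" using P1 l m by simp
  moreover have "2*b0^4 - a0*b0^3 = 0" using P2 l m by simp
  ultimately have "a0 = 0 \<and> b0 = 0" by (rule zero_pt)
  then show False using m by simp
qed

lemma sum_lt4: "(\<Sum>j<4. f j) = f 0 + f 1 + f 2 + f (3::nat)"
  by (simp add: numeral_eq_Suc)
lemma sum_lt3: "(\<Sum>j<3. f j) = f 0 + f 1 + f (2::nat)"
  by (simp add: numeral_eq_Suc)
lemma sum_lt2: "(\<Sum>j<2. f j) = f 0 + f (1::nat)"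
  by (simp add: numeral_eq_Suc)

lemma qq01: "qq 0 1 = -1"
  by (simp add: qq_def cq_def mu_def)

lemma len_ge5:
  assumes rep: "is_rep qq R" and hon: "honest R"
  shows "length R \<ge> 5"
proof (rule ccontr)
  assume "\<not> 5 \<le> length R"
  then have cases: "length R = 0 \<or> length R = 1 \<or> length R = 2 \<or> length R = 3 \<or> length R = 4" by linarith
  have q: "qq = rep_eval R" and lnz: "\<And>j. j < length R \<Longrightarrow> fst (R!j) \<noteq> 0"
    using rep unfolding is_rep_def by auto
  have M: "\<And>k. k \<le> 6 \<Longrightarrow> Mk k R = mu k" using moments[OF q] by blast
  have det: "\<And>i j. i < length R \<Longrightarrow> j < length R \<Longrightarrow> i \<noteq> j \<Longrightarrow>
      fst (snd (R ! i)) * snd (snd (R ! j)) - fst (snd (R ! j)) * snd (snd (R ! i)) \<noteq> 0"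
    using hon unfolding honest_def by blast
  show False
  proof -
    { assume "length R = 0"
      then have "R = []" by simp
      moreover have "qq 0 1 = rep_eval R 0 1" using q by simp
      ultimately have "qq 0 1 = 0" by (simp add: rep_eval_def)
      then have False using qq01 by simp }
    moreover
    { assume "length R = 1"
      then obtain l0 a0 b0 where R: "R = [(l0,a0,b0)]" by (auto simp: length_Suc_conv)
      have l0: "l0 \<noteq> 0" using lnz[of 0] R by simp
      have False
      proof (cases "a0 = 0 \<and> b0 = 0")
        case True
        moreover have "qq 0 1 = rep_eval R 0 1" using q by simp
        ultimately have "qq 0 1 = 0" using R by (simp add: rep_eval_def)
        then show False using qq01 by simp
      next
        case False
        then have "0 < a0*a0 + b0*b0" by (simp add: sum_squares_gt_zero_iff)
        then have nz: "a0*a0 + b0*b0 \<noteq> 0" by linarith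
        show False
        proof (rule len3_false[of l0 a0 b0 0 "-b0" a0 0 "-b0" a0])
          show "l0*a0^k*b0^(6-k) + 0*(-b0)^k*a0^(6-k) + 0*(-b0)^k*a0^(6-k) = mu k" if "k \<le> 6" for k
            using M[OF that] R by (simp add: Mk_def)
          show "l0 \<noteq> 0" by (rule l0)
          show "(a0*a0 - (-b0)*b0)*(a0*a0 - (-b0)*b0) \<noteq> 0" using nz by simp
        qed
      qed }
    moreover
    { assume "length R = 2"
      then obtain l0 a0 b0 l1 a1 b1 where R: "R = [(l0,a0,b0),(l1,a1,b1)]"
        by (auto simp: length_Suc_conv numeral_eq_Suc)
      have l0: "l0 \<noteq> 0" using lnz[of 0] R by simp
      have d: "a0*b1 - a1*b0 \<noteq> 0" using det[of 0 1] R by simp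
      then have "a0 \<noteq> 0 \<or> b0 \<noteq> 0" by auto
      then have "0 < a0*a0 + b0*b0" by (simp add: sum_squares_gt_zero_iff)
      then have nz: "a0*a0 + b0*b0 \<noteq> 0" by linarith
      have False
      proof (rule len3_false[of l0 a0 b0 l1 a1 b1 0 "-b0" a0])
        show "l0*a0^k*b0^(6-k) + l1*a1^k*b1^(6-k) + 0*(-b0)^k*a0^(6-k) = mu k" if "k \<le> 6" for k
          using M[OF that] R by (simp add: Mk_def sum_lt2)
        show "l0 \<noteq> 0" by (rule l0)
        show "(b1*a0 - a1*b0)*(a0*a0 - (-b0)*b0) \<noteq> 0" using nz d by (simp add: mult.commute)
      qed }
    moreover
    { assume "length R = 3"
      then obtain l0 a0 b0 l1 a1 b1 l2 a2 b2 where R: "R = [(l0,a0,b0),(l1,a1,b1),(l2,a2,b2)]"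
        by (auto simp: length_Suc_conv numeral_eq_Suc)
      have l0: "l0 \<noteq> 0" using lnz[of 0] R by simp
      have d1: "a0*b1 - a1*b0 \<noteq> 0" using det[of 0 1] R by simp
      have d2: "a0*b2 - a2*b0 \<noteq> 0" using det[of 0 2] R by simp
      have False
      proof (rule len3_false[of l0 a0 b0 l1 a1 b1 l2 a2 b2])
        show "l0*a0^k*b0^(6-k) + l1*a1^k*b1^(6-k) + l2*a2^k*b2^(6-k) = mu k" if "k \<le> 6" for k
          using M[OF that] R by (simp add: Mk_def sum_lt3)
        show "l0 \<noteq> 0" by (rule l0)
        show "(b1*a0 - a1*b0)*(b2*a0 - a2*b0) \<noteq> 0" using d1 d2 by (simp add: mult.commute)
      qed }
    moreover
    { assume "length R = 4"
      then obtain l0 a0 b0 l1 a1 b1 l2 a2 b2 l3 a3 b3 where R: "R = [(l0,a0,b0),(l1,a1,b1),(l2,a2,b2),(l3,a3,b3)]"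
        by (auto simp: length_Suc_conv numeral_eq_Suc)
      have False
      proof (rule len4_false[of l0 a0 b0 l1 a1 b1 l2 a2 b2 l3 a3 b3])
        show "l0*a0^k*b0^(6-k) + l1*a1^k*b1^(6-k) + l2*a2^k*b2^(6-k) + l3*a3^k*b3^(6-k) = mu k" if "k \<le> 6" for k
          using M[OF that] R by (simp add: Mk_def sum_lt4)
        show "l0 \<noteq> 0" "l1 \<noteq> 0" "l2 \<noteq> 0" "l3 \<noteq> 0"
          using lnz[of 0] lnz[of 1] lnz[of 2] lnz[of 3] R by simp_all
        show "a0*b1 - a1*b0 \<noteq> 0" "a0*b2 - a2*b0 \<noteq> 0" "a0*b3 - a3*b0 \<noteq> 0"
          "a1*b2 - a2*b1 \<noteq> 0" "a1*b3 - a3*b1 \<noteq> 0" "a2*b3 - a3*b2 \<noteq> 0"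
          using det[of 0 1] det[of 0 2] det[of 0 3] det[of 1 2] det[of 1 3] det[of 2 3] R by simp_all
      qed }
    ultimately show False using cases by blast
  qed
qed

lemma sum_lt5: "(\<Sum>j<5. f j) = f 0 + f 1 + f 2 + f 3 + f (4::nat)"
  by (simp add: numeral_eq_Suc)

definition RA :: "(real \<times> real \<times> real) list" where
  "RA = [(1/187, -6, 1), (-1/594, -1, 2), (4/27, 4, 1), (-585, 1, 0), (-5/306, 5, 2)]"
definition RB :: "(real \<times> real \<times> real) list" where
  "RB = [(43/108, -1, 2), (1/9, 1, 4), (1/44, 3, 2), (-5/297, 2, 5), (-220, 0, 1)]"

lemma all_lt5: "(\<forall>i<(5::nat). P i) \<longleftrightarrow> P 0 \<and> P 1 \<and> P 2 \<and> P 3 \<and> P 4"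
  by (auto simp: less_Suc_eq numeral_eq_Suc)

lemma RA_len: "length RA = 5" by (simp add: RA_def)
lemma RB_len: "length RB = 5" by (simp add: RB_def)

lemma RA_honest: "honest RA"
  unfolding honest_def RA_len all_lt5 by (simp add: RA_def)
lemma RB_honest: "honest RB"
  unfolding honest_def RB_len all_lt5 by (simp add: RB_def)

lemma set_lt5: "{j. j < (5::nat) \<and> P j} = {j\<in>{0,1,2,3,4}. P j}"
  by (auto simp: less_Suc_eq numeral_eq_Suc)

lemma RA_badge: "badge RA = (2,3)"
proof -
  have "{j. j < length RA \<and> fst (RA!j) > 0} = {0,2}"
    unfolding RA_len set_lt5 by (auto simp: RA_def)
  moreover have "{j. j < length RA \<and> fst (RA!j) < 0} = {1,3,4}"
    unfolding RA_len set_lt5 by (auto simp: RA_def)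
  ultimately show ?thesis unfolding badge_def by simp
qed

lemma RB_badge: "badge RB = (3,2)"
proof -
  have "{j. j < length RB \<and> fst (RB!j) > 0} = {0,1,2}"
    unfolding RB_len set_lt5 by (auto simp: RB_def)
  moreover have "{j. j < length RB \<and> fst (RB!j) < 0} = {3,4}"
    unfolding RB_len set_lt5 by (auto simp: RB_def)
  ultimately show ?thesis unfolding badge_def by simp
qed

lemma badge_sum:
  assumes "\<forall>j<length R. fst (R!j) \<noteq> 0"
  shows "fst (badge R) + snd (badge R) = length R"
proof -
  have un: "{j. j < length R \<and> fst (R!j) > 0} \<union> {j. j < length R \<and> fst (R!j) < 0} = {..<length R}"
    using assms by (auto simp: linorder_neq_iff)
  have "card ({j. j < length R \<and> fst (R!j) > 0} \<union> {j. j < length R \<and> fst (R!j) < 0})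
        = card {j. j < length R \<and> fst (R!j) > 0} + card {j. j < length R \<and> fst (R!j) < 0}"
    by (rule card_Un_disjoint) auto
  then show ?thesis unfolding badge_def using un by simp
qed


definition mon :: "nat \<Rightarrow> real \<Rightarrow> real \<Rightarrow> real" where "mon k x y = x^k * y^(6-k)"

lemma pow6: "(a*x + b*y)^6 = a^6*mon 6 x y + 6*a^5*b*mon 5 x y + 15*a^4*b^2*mon 4 x y + 20*a^3*b^3*mon 3 x y + 15*a^2*b^4*mon 2 x y + 6*a*b^5*mon 1 x y + b^6*mon 0 x y" for a b x y :: real
  unfolding mon_def binomial_ring by (simp add: numeral_eq_Suc atMost_Suc power_mult_distrib mult_ac)

lemma qq_mon: "qq x y = 16*mon 6 x y + 48*mon 5 x y + 60*mon 4 x y - 160*mon 3 x y - 60*mon 2 x y - 12*mon 1 x y - mon 0 x y"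
  by (simp add: qq_def cq_def mu_def mon_def numeral_eq_Suc atMost_Suc)

lemma RA_rep: "rep_eval RA = qq"
proof (rule ext, rule ext)
  fix x y :: real
  show "rep_eval RA x y = qq x y"
    unfolding qq_mon
    apply (simp add: rep_eval_def RA_def sum_lt5 pow6 del: power_mult_distrib)
    apply (simp add: field_simps)
    done
qed

lemma RB_rep: "rep_eval RB = qq"
proof (rule ext, rule ext)
  fix x y :: real
  show "rep_eval RB x y = qq x y"
    unfolding qq_mon
    apply (simp add: rep_eval_def RB_def sum_lt5 pow6 del: power_mult_distrib)
    apply (simp add: field_simps)
    done
qed

lemma RA_isrep: "is_rep qq RA"
  unfolding is_rep_def RA_len all_lt5 using RA_rep by (simp add: RA_def)
lemma RB_isrep: "is_rep qq RB"
  unfolding is_rep_def RB_len all_lt5 using RB_rep by (simp add: RB_def)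

theorem corollary4p5:
  shows "\<exists>q s1 s2. sextic_form q \<and> is_signature q s1 \<and> is_signature q s2 \<and> s1 \<noteq> s2"
proof -
  have min: "is_signature qq s" if sb: "s \<in> badges qq" and s5: "fst s + snd s = 5" for s
    unfolding is_signature_def
  proof (intro conjI ballI impI)
    show "s \<in> badges qq" by (rule sb)
    fix t assume t: "t \<in> badges qq" "badge_le t s"
    then obtain R where R: "t = badge R" "is_rep qq R" "honest R" unfolding badges_def by blast
    have "length R \<ge> 5" using len_ge5 R(2,3) by blast
    moreover have "fst t + snd t = length R" using badge_sum[of R] R unfolding is_rep_def by auto
    ultimately show "t = s" using t(2) s5 unfolding badge_le_def by (cases t, cases s) auto
  qed
  have A: "(2,3) \<in> badges qq" unfolding badges_def using RA_badge RA_isrep RA_honest by force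
  have B: "(3,2) \<in> badges qq" unfolding badges_def using RB_badge RB_isrep RB_honest by force
  have "is_signature qq (2,3)" by (rule min[OF A]) simp
  moreover have "is_signature qq (3,2)" by (rule min[OF B]) simp
  ultimately have "sextic_form qq \<and> is_signature qq (2,3) \<and> is_signature qq (3,2) \<and> (2::nat,3::nat) \<noteq> (3,2)"
    using sextic_qq by simp
  then show ?thesis by blast
qed

end
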